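(* Let $X$ be a real Banach space, $h:X\times X^*\to\mathbb{R}\cup\{\pm\infty\}$ a proper lower semicontinuous convex function, and $0\leq L\leq\infty$. 1. If $\|y^*\|\leq L$ for all $y^*\in P_1D(h^* )$, then $h(x,x^* )\leq h(z,x^* )+L\|x-z\|$ for all $x^*\in X^*$, $x,z\in X$, and $D(h)=X\times(P_2D(h))$. 2. If $\|y^{**}\|\leq L$ for all $y^{**}\in P_2D(h^* )$, then $h(x,x^* )\leq h(x,z^* )+L\|x^*-z^*\|$ for all $x^*,z^*\in X^*$, $x\in X$, and $D(h)=(P_1D(h))\times X^*$.
   Context: $P_1,P_2$ are the canonical projections of a Cartesian product onto its factors; $D(f)=\{z\;|\;f(z)<\infty\}$. $h$ is proper if $h\not\equiv+\infty$ and $h>-\infty$. The conjugate of $h$ is $h^*:X^*\times X^{**}\to\mathbb{R}\cup\{\pm\infty\}$, $h^*(x^*,x^{**})=\sup_{(y,y^* )\in X\times X^*}\langle y,x^*\rangle+\langle x^{**},y^*\rangle-h(y,y^* )$. *)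

theory Defs
  imports "HOL-Analysis.Analysis"
begin

text \<open>Dual space X* = bounded linear functionals 'a \<Rightarrow>L real, bidual X** = (X*)*.
 Functions on X \<times> X* take values in ereal (= \<real> \<union> {\<plusminus>\<infinity>}).\<close>

definition dom_e :: "('z \<Rightarrow> ereal) \<Rightarrow> 'z set" where
  "dom_e f = {z. f z < \<infinity>}"

definition proper_e :: "('z \<Rightarrow> ereal) \<Rightarrow> bool" where
  "proper_e f \<longleftrightarrow> (\<exists>z. f z \<noteq> \<infinity>) \<and> (\<forall>z. f z > -\<infinity>)"

definition convex_e :: "('z::real_vector \<Rightarrow> ereal) \<Rightarrow> bool" where
  "convex_e f \<longleftrightarrow> convex {(z, t::real). f z \<le> ereal t}"

definition lsc_e :: "('z::topological_space \<Rightarrow> ereal) \<Rightarrow> bool" where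
  "lsc_e f \<longleftrightarrow> (\<forall>t. closed {z. f z \<le> t})"

definition conj_e ::
  "('a::real_normed_vector \<times> ('a \<Rightarrow>\<^sub>L real) \<Rightarrow> ereal)
    \<Rightarrow> ('a \<Rightarrow>\<^sub>L real) \<times> (('a \<Rightarrow>\<^sub>L real) \<Rightarrow>\<^sub>L real) \<Rightarrow> ereal" where
  "conj_e h = (\<lambda>(xs, xss). SUP p \<in> UNIV.
      ereal (blinfun_apply xs (fst p) + blinfun_apply xss (snd p)) - h p)"

end

theory Submission
  imports Defs
begin

definition good :: "('a::real_vector \<Rightarrow> real) \<Rightarrow> ('a \<times> real) set \<Rightarrow> bool" where
 "good p G \<longleftrightarrow> (0,0) \<in> G \<and> (\<forall>x a y b. (x,a)\<in>G \<longrightarrow> (y,b)\<in>G \<longrightarrow> (x+y,a+b)\<in>G) \<and>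
    (\<forall>x a r. (x,a)\<in>G \<longrightarrow> (r *\<^sub>R x, r*a) \<in> G) \<and> (\<forall>x a b. (x,a)\<in>G \<longrightarrow> (x,b)\<in>G \<longrightarrow> a=b)
    \<and> (\<forall>x a. (x,a)\<in>G \<longrightarrow> a \<le> p x)"

lemma goodD:
  assumes "good p G"
  shows good_0: "(0,0) \<in> G"
    and good_add: "(x,a)\<in>G \<Longrightarrow> (y,b)\<in>G \<Longrightarrow> (x+y,a+b)\<in>G"
    and good_scl: "(x,a)\<in>G \<Longrightarrow> (r *\<^sub>R x, r*a) \<in> G"
    and good_fn: "(x,a)\<in>G \<Longrightarrow> (x,b)\<in>G \<Longrightarrow> a=b"
    and good_le: "(x,a)\<in>G \<Longrightarrow> a \<le> p x"
  using assms unfolding good_def by blast+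

lemma good_chain:
  assumes "C \<in> chains {G. good p G}" and p0: "0 \<le> p 0"
  shows "\<exists>U\<in>{G. good p G}. \<forall>X\<in>C. X \<subseteq> U"
proof (cases "C = {}")
  case True
  have "good p {(0,0)}" using p0
    unfolding good_def by auto
  then show ?thesis using True by auto
next
  case False
  have sub: "\<And>X. X \<in> C \<Longrightarrow> good p X" using assms unfolding chains_def by auto
  have ch: "\<And>X Y. X \<in> C \<Longrightarrow> Y \<in> C \<Longrightarrow> X \<subseteq> Y \<or> Y \<subseteq> X"
    using assms unfolding chains_def chain_subset_def by auto
  have "good p (\<Union>C)"
    unfolding good_def
  proof (intro conjI allI impI)
    show "(0,0) \<in> \<Union>C" using False sub good_0 by blast
  next
    fix x a y b assume "(x,a) \<in> \<Union>C" "(y,b) \<in> \<Union>C"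
    then obtain X Y where X: "X \<in> C" "(x,a) \<in> X" and Y: "Y \<in> C" "(y,b) \<in> Y" by auto
    show "(x+y,a+b) \<in> \<Union>C"
    proof (cases "X \<subseteq> Y")
      case True
      then show ?thesis using X Y good_add[OF sub[OF Y(1)]] by blast
    next
      case False
      then have "Y \<subseteq> X" using ch X Y by blast
      then show ?thesis using X Y good_add[OF sub[OF X(1)]] by blast
    qed
  next
    fix x a r assume "(x,a) \<in> \<Union>C"
    then obtain X where X: "X \<in> C" "(x,a) \<in> X" by auto
    then show "(r *\<^sub>R x, r*a) \<in> \<Union>C" using good_scl[OF sub[OF X(1)]] by blast
  next
    fix x a b assume "(x,a) \<in> \<Union>C" "(x,b) \<in> \<Union>C"
    then obtain X Y where X: "X \<in> C" "(x,a) \<in> X" and Y: "Y \<in> C" "(x,b) \<in> Y" by auto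
    show "a = b"
    proof (cases "X \<subseteq> Y")
      case True
      then show ?thesis using X Y good_fn[OF sub[OF Y(1)]] by blast
    next
      case False
      then have "Y \<subseteq> X" using ch X Y by blast
      then show ?thesis using X Y good_fn[OF sub[OF X(1)]] by blast
    qed
  next
    fix x a assume "(x,a) \<in> \<Union>C"
    then obtain X where X: "X \<in> C" "(x,a) \<in> X" by auto
    then show "a \<le> p x" using good_le[OF sub[OF X(1)]] by blast
  qed
  then show ?thesis by auto
qed

lemma good_extend:
  fixes p :: "'a::real_vector \<Rightarrow> real"
  assumes sub: "\<And>x y. p (x + y) \<le> p x + p y"
    and hom: "\<And>s x. s > 0 \<Longrightarrow> p (s *\<^sub>R x) = s * p x"
    and G: "good p M" and x0: "\<forall>a. (x0,a) \<notin> M"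
  shows "\<exists>G'. good p G' \<and> M \<subseteq> G' \<and> G' \<noteq> M"
proof -
  have add: "\<And>x a y b. (x,a)\<in>M \<Longrightarrow> (y,b)\<in>M \<Longrightarrow> (x+y,a+b)\<in>M"
   and scl: "\<And>x a r. (x,a)\<in>M \<Longrightarrow> (r *\<^sub>R x, r*a) \<in> M"
   and fnc: "\<And>x a b. (x,a)\<in>M \<Longrightarrow> (x,b)\<in>M \<Longrightarrow> a=b"
   and dom: "\<And>x a. (x,a)\<in>M \<Longrightarrow> a \<le> p x"
   and z: "(0,0) \<in> M"
    using goodD[OF G] by blast+
  define S where "S = {a' - p (m' - x0) | m' a'. (m',a') \<in> M}"
  define c where "c = Sup S"
  have key: "a' - p (m' - x0) \<le> p (m + x0) - a" if "(m,a)\<in>M" "(m',a')\<in>M" for m a m' a'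
  proof -
    have "a + a' \<le> p (m + m')" using dom add that by blast
    also have "\<dots> \<le> p (m + x0) + p (m' - x0)" using sub[of "m + x0" "m' - x0"] by simp
    finally show ?thesis by simp
  qed
  have Sne: "S \<noteq> {}" using z unfolding S_def by blast
  have Sbdd: "bdd_above S" unfolding S_def bdd_above_def using key[OF z] by blast
  have c_up: "a' - p (m' - x0) \<le> c" if "(m',a')\<in>M" for m' a'
    unfolding c_def using that Sbdd by (auto intro!: cSup_upper simp: S_def)
  have c_low: "c \<le> p (m + x0) - a" if "(m,a)\<in>M" for m a
    unfolding c_def using that Sne key by (auto intro!: cSup_least simp: S_def)
  define G' where "G' = {(m + t *\<^sub>R x0, a + t * c) | m a t. (m,a) \<in> M}"
  have "good p G'"
    unfolding good_def
  proof (intro conjI allI impI)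
    show "(0,0) \<in> G'" unfolding G'_def using z by force
  next
    fix x a y b assume "(x,a) \<in> G'" "(y,b) \<in> G'"
    then obtain m1 a1 t1 m2 a2 t2 where "(m1,a1)\<in>M" "(m2,a2)\<in>M" "x = m1 + t1 *\<^sub>R x0" "a = a1 + t1 * c"
      "y = m2 + t2 *\<^sub>R x0" "b = a2 + t2 * c" unfolding G'_def by blast
    moreover have "(m1+m2, a1+a2) \<in> M" using add by (simp add: calculation)
    moreover have "x + y = (m1+m2) + (t1+t2) *\<^sub>R x0" "a + b = (a1+a2) + (t1+t2) * c"
      using calculation by (simp_all add: algebra_simps)
    ultimately show "(x+y,a+b) \<in> G'" unfolding G'_def by blast
  next
    fix x a r assume "(x,a) \<in> G'"
    then obtain m1 a1 t1 where "(m1,a1)\<in>M" "x = m1 + t1 *\<^sub>R x0" "a = a1 + t1 * c"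
      unfolding G'_def by blast
    moreover have "(r *\<^sub>R m1, r*a1) \<in> M" using scl by (simp add: calculation)
    moreover have "r *\<^sub>R x = r *\<^sub>R m1 + (r*t1) *\<^sub>R x0" "r * a = r*a1 + (r*t1) * c"
      using calculation by (simp_all add: algebra_simps)
    ultimately show "(r *\<^sub>R x, r*a) \<in> G'" unfolding G'_def by blast
  next
    fix x a b assume "(x,a) \<in> G'" "(x,b) \<in> G'"
    then obtain m1 a1 t1 m2 a2 t2 where m: "(m1,a1)\<in>M" "(m2,a2)\<in>M" "x = m1 + t1 *\<^sub>R x0" "a = a1 + t1 * c"
      "x = m2 + t2 *\<^sub>R x0" "b = a2 + t2 * c" unfolding G'_def by blast
    have tt: "t1 = t2"
    proof (rule ccontr)
      assume ne: "t1 \<noteq> t2"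
      have "(m2 + (-1) *\<^sub>R m1, a2 + (-1) * a1) \<in> M" using add scl m by blast
      then have "(m2 - m1, a2 - a1) \<in> M" by simp
      then have "((1/(t1-t2)) *\<^sub>R (m2 - m1), (1/(t1-t2)) * (a2 - a1)) \<in> M"
        by (rule scl)
      moreover have "(1/(t1-t2)) *\<^sub>R (m2 - m1) = x0"
      proof -
        have "m2 - m1 = (t1 - t2) *\<^sub>R x0" using m(3,5) by (simp add: algebra_simps)
        then show ?thesis using ne by simp
      qed
      ultimately show False using x0 by metis
    qed
    then have "m1 = m2" using m by simp
    then have "a1 = a2" using fnc m by blast
    then show "a = b" using m tt by simp
  next
    fix x a assume "(x,a) \<in> G'"
    then obtain m a1 t where m: "(m,a1)\<in>M" "x = m + t *\<^sub>R x0" "a = a1 + t * c"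
      unfolding G'_def by blast
    consider "t = 0" | "t > 0" | "t < 0" by linarith
    then show "a \<le> p x"
    proof cases
      case 1 then show ?thesis using m dom by simp
    next
      case 2
      have "((1/t) *\<^sub>R m, (1/t) * a1) \<in> M" using scl m by blast
      from c_low[OF this] have "c \<le> p ((1/t) *\<^sub>R m + x0) - (1/t) * a1" .
      then have "t * c \<le> t * p ((1/t) *\<^sub>R m + x0) - a1" using 2
        by (simp add: field_simps)
      also have "t * p ((1/t) *\<^sub>R m + x0) = p (t *\<^sub>R ((1/t) *\<^sub>R m + x0))" using hom 2 by simp
      also have "t *\<^sub>R ((1/t) *\<^sub>R m + x0) = x" using m 2 by (simp add: scaleR_add_right)
      finally show ?thesis using m by simp
    next
      case 3
      define s where "s = - t"
      have s: "s > 0" using 3 s_def by simp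
      have "((1/s) *\<^sub>R m, (1/s) * a1) \<in> M" using scl m by blast
      from c_up[OF this] have "(1/s) * a1 - p ((1/s) *\<^sub>R m - x0) \<le> c" .
      then have "a1 - s * p ((1/s) *\<^sub>R m - x0) \<le> s * c" using s
        by (simp add: field_simps)
      also have "s * p ((1/s) *\<^sub>R m - x0) = p (s *\<^sub>R ((1/s) *\<^sub>R m - x0))" using hom s by simp
      also have "s *\<^sub>R ((1/s) *\<^sub>R m - x0) = x" using m s s_def by (simp add: scaleR_diff_right)
      finally show ?thesis using m s_def by simp
    qed
  qed
  moreover have "M \<subseteq> G'" unfolding G'_def by force
  moreover have "(x0, c) \<in> G'" unfolding G'_def
    by (rule CollectI, rule exI[of _ 0], rule exI[of _ 0], rule exI[of _ 1]) (use z in simp)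
  ultimately show ?thesis using x0 by blast
qed

lemma hahn_banach_sublinear:
  fixes p :: "'a::real_vector \<Rightarrow> real"
  assumes sub: "\<And>x y. p (x + y) \<le> p x + p y"
    and hom: "\<And>s x. s > 0 \<Longrightarrow> p (s *\<^sub>R x) = s * p x"
  shows "\<exists>F. (\<forall>x y. F (x + y) = F x + F y) \<and> (\<forall>r x. F (r *\<^sub>R x) = r * F x) \<and> (\<forall>x. F x \<le> p x)"
proof -
  have "p 0 = 2 * p 0" using hom[of 2 0] by simp
  then have p0: "p 0 = 0" by simp
  obtain M where M: "M \<in> {G. good p G}" and max: "\<forall>X\<in>{G. good p G}. M \<subseteq> X \<longrightarrow> X = M"
    using Zorn_Lemma2[of "{G. good p G}"] good_chain[of _ p] p0 by force
  have gM: "good p M" using M by simp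
  have tot: "\<exists>a. (x,a) \<in> M" for x
  proof (rule ccontr)
    assume "\<not> ?thesis"
    then obtain G' where "good p G'" "M \<subseteq> G'" "G' \<noteq> M" using good_extend[OF sub hom gM] by blast
    then show False using max by blast
  qed
  define F where "F x = (THE a. (x,a) \<in> M)" for x
  have fnc: "\<And>x a b. (x,a)\<in>M \<Longrightarrow> (x,b)\<in>M \<Longrightarrow> a=b" using good_fn[OF gM] by blast
  have FM: "(x, F x) \<in> M" for x
  proof -
    obtain a where "(x,a) \<in> M" using tot by blast
    then show ?thesis unfolding F_def by (rule theI) (use fnc \<open>(x,a) \<in> M\<close> in blast)
  qed
  have Feq: "(x,a) \<in> M \<Longrightarrow> F x = a" for x a using FM fnc by blast
  show ?thesis
  proof (intro exI[of _ F] conjI allI)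
    fix x y show "F (x + y) = F x + F y"
      using good_add[OF gM FM[of x] FM[of y]] Feq by blast
  next
    fix r x show "F (r *\<^sub>R x) = r * F x"
      using good_scl[OF gM FM[of x]] Feq by blast
  next
    fix x show "F x \<le> p x" using good_le[OF gM FM[of x]] .
  qed
qed


lemma sep_convex:
  fixes D :: "'v::real_normed_vector set"
  assumes cvx: "convex D" and ne: "D \<noteq> {}" and dpos: "\<delta> > 0" and far: "\<And>d. d \<in> D \<Longrightarrow> \<delta> \<le> norm d"
  shows "\<exists>F. bounded_linear F \<and> (\<forall>d\<in>D. \<delta> \<le> F d)"
proof -
  define S where "S x = {norm (x + t *\<^sub>R d) - t*\<delta> | t d. t \<ge> 0 \<and> d \<in> D}" for x
  define p where "p x = Inf (S x)" for x
  obtain d0 where d0: "d0 \<in> D" using ne by blast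
  have memS: "norm (x + t *\<^sub>R d) - t*\<delta> \<in> S x" if "t \<ge> 0" "d \<in> D" for x t d
    unfolding S_def by (rule CollectI, rule exI[of _ t], rule exI[of _ d]) (simp add: that)
  have Sne: "S x \<noteq> {}" for x using memS[OF order_refl d0] by blast
  have lb: "- norm x \<le> e" if eS: "e \<in> S x" for x e
  proof -
    obtain t d where td: "t \<ge> 0" "d \<in> D" "e = norm (x + t *\<^sub>R d) - t*\<delta>" using eS unfolding S_def by blast
    have "t * \<delta> \<le> t * norm d" using td(1) far[OF td(2)] by (rule mult_left_mono[rotated])
    also have "t * norm d = norm (t *\<^sub>R d)" using td by simp
    also have "norm (t *\<^sub>R d) \<le> norm (x + t *\<^sub>R d) + norm x"
      using norm_triangle_ineq4[of "x + t *\<^sub>R d" x] by simp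
    finally show ?thesis using td by simp
  qed
  have bdd: "bdd_below (S x)" for x unfolding bdd_below_def using lb by blast
  have p_le: "p x \<le> e" if "e \<in> S x" for x e unfolding p_def using that bdd by (rule cInf_lower)
  have p_ge: "b \<le> p x" if "\<And>e. e \<in> S x \<Longrightarrow> b \<le> e" for x b
    unfolding p_def using Sne that by (rule cInf_greatest)
  have p_norm: "p x \<le> norm x" for x using p_le[OF memS[OF order_refl d0, of x]] by simp
  have hom1: "p (s *\<^sub>R x) \<le> s * p x" if s: "s > 0" for s x
  proof -
    have "p (s *\<^sub>R x) / s \<le> e" if "e \<in> S x" for e
    proof -
      obtain t d where td: "t \<ge> 0" "d \<in> D" "e = norm (x + t *\<^sub>R d) - t*\<delta>" using \<open>e \<in> S x\<close> unfolding S_def by blast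
      have eq: "s *\<^sub>R x + (s*t) *\<^sub>R d = s *\<^sub>R (x + t *\<^sub>R d)" by (simp add: scaleR_add_right)
      have "s * e = norm (s *\<^sub>R (x + t *\<^sub>R d)) - (s*t)*\<delta>"
        using s td by (simp add: right_diff_distrib)
      also have "\<dots> = norm (s *\<^sub>R x + (s*t) *\<^sub>R d) - (s*t)*\<delta>" by (simp only: eq)
      also have "\<dots> \<in> S (s *\<^sub>R x)" using memS td s by simp
      finally have "p (s *\<^sub>R x) \<le> s * e" by (rule p_le)
      then show ?thesis using s by (simp add: divide_le_eq mult.commute)
    qed
    then have "p (s *\<^sub>R x) / s \<le> p x" by (rule p_ge)
    then show ?thesis using s by (simp add: divide_le_eq mult.commute)
  qed
  have hom: "p (s *\<^sub>R x) = s * p x" if s: "s > 0" for s x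
  proof -
    have "p ((1/s) *\<^sub>R (s *\<^sub>R x)) \<le> (1/s) * p (s *\<^sub>R x)" using hom1[of "1/s" "s *\<^sub>R x"] s by simp
    moreover have "(1/s) *\<^sub>R (s *\<^sub>R x) = x" using s by simp
    ultimately have "p x \<le> (1/s) * p (s *\<^sub>R x)" by simp
    then have "s * p x \<le> p (s *\<^sub>R x)" using s by (simp add: field_simps)
    then show ?thesis using hom1[OF s, of x] by simp
  qed
  have sub: "p (x + y) \<le> p x + p y" for x y
  proof -
    have "p (x + y) \<le> e1 + e2" if "e1 \<in> S x" "e2 \<in> S y" for e1 e2
    proof -
      obtain t1 d1 where td1: "t1 \<ge> 0" "d1 \<in> D" "e1 = norm (x + t1 *\<^sub>R d1) - t1*\<delta>" using \<open>e1 \<in> S x\<close> unfolding S_def by blast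
      obtain t2 d2 where td2: "t2 \<ge> 0" "d2 \<in> D" "e2 = norm (y + t2 *\<^sub>R d2) - t2*\<delta>" using \<open>e2 \<in> S y\<close> unfolding S_def by blast
      show ?thesis
      proof (cases "t1 + t2 = 0")
        case True
        then have "t1 = 0" "t2 = 0" using td1 td2 by auto
        then have "e1 + e2 = norm x + norm y" using td1 td2 by simp
        moreover have "p (x + y) \<le> norm (x + y)" by (rule p_norm)
        ultimately show ?thesis using norm_triangle_ineq[of x y] by simp
      next
        case False
        define T where "T = t1 + t2"
        have T: "T > 0" using False td1 td2 T_def by simp
        define d where "d = (t1/T) *\<^sub>R d1 + (t2/T) *\<^sub>R d2"
        have dD: "d \<in> D" unfolding d_def
          using convexD[OF cvx td1(2) td2(2), of "t1/T" "t2/T"] T td1 td2 T_def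
          by (simp add: add_divide_distrib[symmetric])
        have Td: "T *\<^sub>R d = t1 *\<^sub>R d1 + t2 *\<^sub>R d2" unfolding d_def using T
          by (simp add: scaleR_add_right)
        have "p (x + y) \<le> norm (x + y + T *\<^sub>R d) - T*\<delta>" using p_le memS dD T by simp
        also have "x + y + T *\<^sub>R d = (x + t1 *\<^sub>R d1) + (y + t2 *\<^sub>R d2)" using Td by (simp add: algebra_simps)
        also have "norm \<dots> \<le> norm (x + t1 *\<^sub>R d1) + norm (y + t2 *\<^sub>R d2)" by (rule norm_triangle_ineq)
        finally show ?thesis using td1 td2 T_def by (simp add: algebra_simps)
      qed
    qed
    then have "\<And>e2. e2 \<in> S y \<Longrightarrow> p (x + y) - e2 \<le> p x"
      by (intro p_ge) (smt (verit))
    then have "\<And>e2. e2 \<in> S y \<Longrightarrow> p (x + y) - p x \<le> e2" by (smt (verit))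
    then have "p (x + y) - p x \<le> p y" by (rule p_ge)
    then show ?thesis by simp
  qed
  obtain F where Fadd: "\<And>x y. F (x + y) = F x + F y" and Fscl: "\<And>r x. F (r *\<^sub>R x) = r * F x"
    and Fle: "\<And>x. F x \<le> p x"
    using hahn_banach_sublinear[of p, OF sub hom] by blast
  have bl: "bounded_linear F"
  proof (rule bounded_linear_intro[where K=1])
    fix x
    have "F x \<le> norm x" using Fle p_norm order_trans by blast
    moreover have "- F x \<le> norm x" using Fle[of "-x"] p_norm[of "-x"] Fscl[of "-1" x] by simp
    ultimately show "norm (F x) \<le> norm x * 1" by simp
  qed (use Fadd Fscl in auto)
  have "\<delta> \<le> F d" if "d \<in> D" for d
  proof -
    have "F (-d) \<le> norm (-d + 1 *\<^sub>R d) - 1*\<delta>" using Fle[of "-d"] p_le[OF memS[OF _ that, of 1 "-d"]] by simp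
    then show ?thesis using Fscl[of "-1" d] by simp
  qed
  then show ?thesis using bl by blast
qed


lemma sep_epi:
  fixes h :: "'w::real_normed_vector \<Rightarrow> ereal"
  assumes pr: "proper_e h" and ls: "lsc_e h" and cv: "convex_e h" and tw: "ereal t < h w"
  shows "\<exists>phi bet dl. bounded_linear phi \<and> dl > 0 \<and> bet \<ge> 0 \<and>
           (\<forall>u s. h u \<le> ereal s \<longrightarrow> phi w + bet*t + dl \<le> phi u + bet * s)"
proof -
  define E where "E = {(z, t::real). h z \<le> ereal t}"
  have cE: "convex E" using cv unfolding convex_e_def E_def .
  have oE: "open (- E)"
  proof (rule open_prod_intro)
    fix q assume "q \<in> - E"
    then obtain u s where q: "q = (u,s)" "ereal s < h u" unfolding E_def by (cases q) auto
    then obtain r where r: "ereal s < ereal r" "ereal r < h u" using ereal_dense2 by blast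
    have "open (- {z. h z \<le> ereal r})" using ls unfolding lsc_e_def by auto
    moreover have "open {..<r}" by simp
    moreover have "q \<in> (- {z. h z \<le> ereal r}) \<times> {..<r}" using q r by auto
    moreover have "(- {z. h z \<le> ereal r}) \<times> {..<r} \<subseteq> - E"
      unfolding E_def by (auto intro: order_trans[of _ "ereal _" "ereal r"])
    ultimately show "\<exists>A B. open A \<and> open B \<and> q \<in> A \<times> B \<and> A \<times> B \<subseteq> - E" by blast
  qed
  define q where "q = (w, t)"
  have "q \<in> - E" using tw unfolding E_def q_def by auto
  then obtain eps where eps: "eps > 0" "ball q eps \<subseteq> - E" using oE open_contains_ball by blast
  define D where "D = (\<lambda>e. e - q) ` E"
  have cD: "convex D" unfolding D_def using cE by (rule convex_translation_subtract)
  obtain u0 where u0: "h u0 \<noteq> \<infinity>" using pr unfolding proper_e_def by blast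
  have "h u0 \<noteq> -\<infinity>" using pr unfolding proper_e_def by auto
  then obtain r0 where r0: "h u0 = ereal r0" using u0 by (cases "h u0") auto
  have u0E: "(u0, r0) \<in> E" unfolding E_def using r0 by simp
  have neD: "D \<noteq> {}" unfolding D_def using u0E by blast
  have farD: "eps \<le> norm d" if dD: "d \<in> D" for d
  proof -
    obtain e where e: "e \<in> E" "d = e - q" using dD unfolding D_def by blast
    have "e \<notin> ball q eps" using e eps by blast
    then show ?thesis using e by (simp add: dist_norm norm_minus_commute)
  qed
  obtain F where F: "bounded_linear F" and Fd: "\<forall>d\<in>D. eps \<le> F d"
    using sep_convex[OF cD neD eps(1) farD] by blast
  define phi where "phi u = F (u, 0)" for u
  define bet where "bet = F (0, 1)"
  have Fsplit: "F (u, s) = phi u + s * bet" for u s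
  proof -
    have lin: "linear F" using F by (rule bounded_linear.linear)
    have "F (u, s) = F ((u, 0) + s *\<^sub>R (0, 1))" by simp
    also have "\<dots> = F (u,0) + s * F (0,1)"
      by (simp only: linear_add[OF lin] linear_scale[OF lin] real_scaleR_def)
    finally show ?thesis unfolding phi_def bet_def by simp
  qed
  have bl: "bounded_linear phi" unfolding phi_def
    using bounded_linear_compose[OF F bounded_linear_Pair[OF bounded_linear_ident bounded_linear_zero]] .
  have key: "phi w + bet*t + eps \<le> phi u + bet * s" if "h u \<le> ereal s" for u s
  proof -
    have "(u,s) \<in> E" using that unfolding E_def by simp
    then have "eps \<le> F ((u,s) - q)" using Fd unfolding D_def by blast
    also have "F ((u,s) - q) = F (u,s) - F q" using linear_diff[OF bounded_linear.linear[OF F]] by simp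
    finally show ?thesis unfolding q_def Fsplit by (simp add: algebra_simps)
  qed
  have "bet \<ge> 0"
  proof (rule ccontr)
    assume "\<not> bet \<ge> 0"
    then have b: "bet < 0" by simp
    define K where "K = phi w + bet*t + eps - phi u0 - bet*r0"
    define s where "s = r0 + \<bar>K\<bar> / (- bet) + 1"
    have "s \<ge> r0" unfolding s_def using b by (simp add: divide_nonneg_pos)
    then have "h u0 \<le> ereal s" using r0 by simp
    from key[OF this] have "phi w + bet*t + eps \<le> phi u0 + bet * s" .
    moreover have "bet * s = bet * r0 - \<bar>K\<bar> + bet" unfolding s_def using b
      by (simp add: field_simps)
    ultimately show False unfolding K_def using b by linarith
  qed
  then show ?thesis using bl eps(1) key by blast
qed

lemma minorant_pos:
  fixes h :: "'w::real_normed_vector \<Rightarrow> ereal"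
  assumes bl: "bounded_linear phi" and b: "bet > 0" and d: "dl > 0"
    and key: "\<forall>u s. h u \<le> ereal s \<longrightarrow> phi w + bet*t + dl \<le> phi u + bet * s"
    and ninf: "\<And>u. h u \<noteq> -\<infinity>"
  shows "\<exists>psi c. bounded_linear psi \<and> (\<forall>u. ereal (psi u - c) \<le> h u) \<and> t < psi w - c"
proof -
  define psi where "psi u = (-1/bet) * phi u" for u
  define c where "c = -(phi w + bet*t + dl)/bet"
  have "bounded_linear psi" unfolding psi_def
    using bounded_linear_compose[OF bounded_linear_mult_right bl] .
  moreover have "ereal (psi u - c) \<le> h u" for u
  proof (cases "h u")
    case (real s)
    then have "phi w + bet*t + dl \<le> phi u + bet * s" using key by simp
    then have "psi u - c \<le> s" unfolding psi_def c_def using b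
      by (simp add: field_simps)
    then show ?thesis using real by simp
  next
    case PInf then show ?thesis by simp
  next
    case MInf then show ?thesis using ninf by simp
  qed
  moreover have "t < psi w - c" unfolding psi_def c_def using b d
    by (simp add: field_simps)
  ultimately show ?thesis by blast
qed

lemma minorant:
  fixes h :: "'w::real_normed_vector \<Rightarrow> ereal"
  assumes pr: "proper_e h" and ls: "lsc_e h" and cv: "convex_e h" and tw: "ereal t < h w"
  shows "\<exists>psi c. bounded_linear psi \<and> (\<forall>u. ereal (psi u - c) \<le> h u) \<and> t < psi w - c"
proof -
  have ninf: "\<And>u. h u \<noteq> -\<infinity>" using pr unfolding proper_e_def by auto
  obtain phi bet dl where bl: "bounded_linear phi" and d: "dl > 0" and b: "bet \<ge> 0"
    and key: "\<forall>u s. h u \<le> ereal s \<longrightarrow> phi w + bet*t + dl \<le> phi u + bet * s"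
    using sep_epi[OF pr ls cv tw] by blast
  show ?thesis
  proof (cases "bet > 0")
    case True
    then show ?thesis using minorant_pos[OF bl True d key ninf] by blast
  next
    case False
    then have b0: "bet = 0" using b by simp
    obtain u0 where u0: "h u0 \<noteq> \<infinity>" using pr unfolding proper_e_def by blast
    then obtain r0 where r0: "h u0 = ereal r0" using ninf[of u0] by (cases "h u0") auto
    have "ereal (r0 - 1) < h u0" using r0 by simp
    then obtain phz bez dlz where bl0: "bounded_linear phz" and d0: "dlz > 0"
      and key0: "\<forall>u s. h u \<le> ereal s \<longrightarrow> phz u0 + bez*(r0-1) + dlz \<le> phz u + bez * s"
      using sep_epi[OF pr ls cv] by blast
    have "phz u0 + bez*(r0-1) + dlz \<le> phz u0 + bez*r0" using key0 r0 by simp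
    then have b0p: "bez > 0" using d0 by (simp add: algebra_simps)
    obtain psz c0 where bl0': "bounded_linear psz" and min0: "\<forall>u. ereal (psz u - c0) \<le> h u"
      using minorant_pos[OF bl0 b0p d0 key0 ninf] by blast
    define k where "k = max 0 ((t - (psz w - c0))/dl + 1)"
    define psi where "psi u = psz u - k * phi u" for u
    define c where "c = c0 - k * (phi w + dl)"
    have "bounded_linear psi" unfolding psi_def
      using bounded_linear_sub[OF bl0' bounded_linear_compose[OF bounded_linear_mult_right bl]] .
    moreover have "ereal (psi u - c) \<le> h u" for u
    proof (cases "h u")
      case (real s)
      then have hus: "h u \<le> ereal s" by simp
      have "phi w + dl \<le> phi u" using key[rule_format, OF hus] b0 by simp
      moreover have "k \<ge> 0" unfolding k_def by simp
      ultimately have "k * (phi w + dl - phi u) \<le> 0" by (simp add: mult_nonneg_nonpos)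
      moreover have "psz u - c0 \<le> s" using min0 real by (metis ereal_less_eq(3))
      ultimately have "psi u - c \<le> s" unfolding psi_def c_def by (simp add: algebra_simps)
      then show ?thesis using real by simp
    next
      case PInf then show ?thesis by simp
    next
      case MInf then show ?thesis using ninf by simp
    qed
    moreover have "t < psi w - c"
    proof -
      have "k \<ge> (t - (psz w - c0))/dl + 1" unfolding k_def by simp
      then have "k * dl \<ge> ((t - (psz w - c0))/dl + 1) * dl" using d by (simp add: mult_right_mono)
      also have "((t - (psz w - c0))/dl + 1) * dl = t - (psz w - c0) + dl" using d by (simp add: field_simps)
      finally show ?thesis unfolding psi_def c_def using d by (simp add: algebra_simps)
    qed
    ultimately show ?thesis by blast
  qed
qed


lemma dual_dom:
  fixes h :: "'a::real_normed_vector \<times> ('a \<Rightarrow>\<^sub>L real) \<Rightarrow> ereal"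
  assumes bl: "bounded_linear psi" and mn: "\<forall>u. ereal (psi u - c) \<le> h u"
  shows "(Blinfun (\<lambda>x. psi (x,0)), Blinfun (\<lambda>xs. psi (0,xs))) \<in> dom_e (conj_e h)"
proof -
  have bl1: "bounded_linear (\<lambda>x. psi (x,0))"
    using bounded_linear_compose[OF bl bounded_linear_Pair[OF bounded_linear_ident bounded_linear_zero]] .
  have bl2: "bounded_linear (\<lambda>x. psi (0,x))"
    using bounded_linear_compose[OF bl bounded_linear_Pair[OF bounded_linear_zero bounded_linear_ident]] .
  have lin: "linear psi" using bl by (rule bounded_linear.linear)
  have split: "psi (fst p, 0) + psi (0, snd p) = psi p" for p
  proof -
    have "psi (fst p, 0) + psi (0, snd p) = psi ((fst p, 0) + (0, snd p))"
      by (simp only: linear_add[OF lin])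
    also have "(fst p, 0) + (0, snd p) = p" by (cases p) simp
    finally show ?thesis .
  qed
  have le: "ereal (psi p) - h p \<le> ereal c" for p
  proof (cases "h p")
    case (real r)
    then have "psi p - c \<le> r" using mn by (metis ereal_less_eq(3))
    then show ?thesis using real by simp
  next
    case PInf then show ?thesis by simp
  next
    case MInf then show ?thesis using mn by (metis MInf ereal_less_eq(1) ereal_less_eq(2) ereal_infty_less_eq(2) MInfty_neq_ereal(1))
  qed
  have "conj_e h (Blinfun (\<lambda>x. psi (x,0)), Blinfun (\<lambda>xs. psi (0,xs))) \<le> ereal c"
    unfolding conj_e_def using bounded_linear_Blinfun_apply[OF bl1] bounded_linear_Blinfun_apply[OF bl2]
    by (simp add: split le SUP_least)
  then show ?thesis unfolding dom_e_def
    using order_le_less_trans by fastforce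
qed


theorem proposition3p5:
  fixes h :: "'a::banach \<times> ('a \<Rightarrow>\<^sub>L real) \<Rightarrow> ereal"
    and L :: ereal
  assumes "proper_e h" and "lsc_e h" and "convex_e h" and "0 \<le> L"
  shows
    "((\<forall>ys \<in> fst ` dom_e (conj_e h). ereal (norm ys) \<le> L) \<longrightarrow>
        (\<forall>xs x z. h (x, xs) \<le> h (z, xs) + L * ereal (norm (x - z))) \<and>
        (L < \<infinity> \<longrightarrow> dom_e h = UNIV \<times> (snd ` dom_e h)))
     \<and>
     ((\<forall>yss \<in> snd ` dom_e (conj_e h). ereal (norm yss) \<le> L) \<longrightarrow>
        (\<forall>xs zs x. h (x, xs) \<le> h (x, zs) + L * ereal (norm (xs - zs))) \<and>
        (L < \<infinity> \<longrightarrow> dom_e h = (fst ` dom_e h) \<times> UNIV))"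
proof -
  note pr = assms(1) and ls = assms(2) and cv = assms(3) and L0 = assms(4)
  have ninf: "\<And>u. h u \<noteq> -\<infinity>" using pr unfolding proper_e_def by auto
  have gen: "h w1 \<le> h w2 + L * ereal nd"
    if nd0: "nd \<ge> 0" and
       bnd: "\<And>psi c. bounded_linear psi \<Longrightarrow> \<forall>u. ereal (psi u - c) \<le> h u \<Longrightarrow> L \<noteq> \<infinity> \<Longrightarrow>
               psi w1 - psi w2 \<le> real_of_ereal L * nd"
       and w12: "nd = 0 \<Longrightarrow> w1 = w2"
    for w1 w2 nd
  proof (rule ccontr)
    assume nl: "\<not> h w1 \<le> h w2 + L * ereal nd"
    have "h w2 \<noteq> \<infinity>"
    proof
      assume "h w2 = \<infinity>"
      moreover have "L * ereal nd \<noteq> -\<infinity>" using L0 nd0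
        by (cases L) auto
      ultimately show False using nl by simp
    qed
    then obtain a where a: "h w2 = ereal a" using ninf[of w2] by (cases "h w2") auto
    have Lfin: "L \<noteq> \<infinity>"
    proof
      assume Linf: "L = \<infinity>"
      show False
      proof (cases "nd = 0")
        case True
        then show False using nl w12 Linf a by simp
      next
        case False
        then have "nd > 0" using nd0 by simp
        then show False using nl Linf a by simp
      qed
    qed
    then obtain l where l: "L = ereal l" using L0 by (cases L) auto
    define t where "t = a + l * nd"
    have "ereal t < h w1" using nl a l unfolding t_def by simp
    then obtain psi c where bl: "bounded_linear psi" and mn: "\<forall>u. ereal (psi u - c) \<le> h u"
      and tw: "t < psi w1 - c"
      using minorant[OF pr ls cv] by blast
    have "psi w2 - c \<le> a" using mn a by (metis ereal_less_eq(3))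
    moreover have "psi w1 - psi w2 \<le> l * nd" using bnd[OF bl mn Lfin] l by simp
    ultimately show False using tw unfolding t_def by simp
  qed
  have lin1: "linear psi \<Longrightarrow> psi (x, xs) - psi (z, xs) = psi (x - z, 0)" for psi :: "'a \<times> ('a \<Rightarrow>\<^sub>L real) \<Rightarrow> real" and x z xs
  proof -
    assume lin: "linear psi"
    have "psi (x, xs) - psi (z, xs) = psi ((x, xs) - (z, xs))" by (simp only: linear_diff[OF lin])
    then show ?thesis by simp
  qed
  have lin2: "linear psi \<Longrightarrow> psi (x, xs) - psi (x, zs) = psi (0, xs - zs)" for psi :: "'a \<times> ('a \<Rightarrow>\<^sub>L real) \<Rightarrow> real" and x zs xs
  proof -
    assume lin: "linear psi"
    have "psi (x, xs) - psi (x, zs) = psi ((x, xs) - (x, zs))" by (simp only: linear_diff[OF lin])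
    then show ?thesis by simp
  qed
  have fin: "h u \<le> h v + L * ereal r \<Longrightarrow> v \<in> dom_e h \<Longrightarrow> L < \<infinity> \<Longrightarrow> u \<in> dom_e h" for u v r
  proof -
    assume a1: "h u \<le> h v + L * ereal r" and a2: "v \<in> dom_e h" and a3: "L < \<infinity>"
    obtain l where "L = ereal l" using L0 a3 by (cases L) auto
    moreover obtain b where "h v = ereal b" using a2 ninf[of v] unfolding dom_e_def by (cases "h v") auto
    ultimately have "h v + L * ereal r < \<infinity>" by simp
    with a1 have "h u < \<infinity>" by (rule order_le_less_trans)
    then show ?thesis unfolding dom_e_def by simp
  qed
  show ?thesis
  proof (intro conjI impI)
    assume H: "\<forall>ys \<in> fst ` dom_e (conj_e h). ereal (norm ys) \<le> L"
    show lip: "\<forall>xs x z. h (x, xs) \<le> h (z, xs) + L * ereal (norm (x - z))"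
    proof (intro allI)
      fix xs x z
      show "h (x, xs) \<le> h (z, xs) + L * ereal (norm (x - z))"
      proof (rule gen[of "norm (x - z)"])
        fix psi c assume bl: "bounded_linear psi" and mn: "\<forall>u. ereal (psi u - c) \<le> h u" and Lf: "L \<noteq> \<infinity>"
        define ys where "ys = Blinfun (\<lambda>x. psi (x,0))"
        have bl1: "bounded_linear (\<lambda>x. psi (x,0))"
          using bounded_linear_compose[OF bl bounded_linear_Pair[OF bounded_linear_ident bounded_linear_zero]] .
        have "ys \<in> fst ` dom_e (conj_e h)" using dual_dom[OF bl mn] unfolding ys_def by force
        then have "ereal (norm ys) \<le> L" using H by blast
        then have nys: "norm ys \<le> real_of_ereal L" using Lf L0 by (cases L) auto
        have "psi (x, xs) - psi (z, xs) = blinfun_apply ys (x - z)"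
          using lin1[OF bounded_linear.linear[OF bl]] bounded_linear_Blinfun_apply[OF bl1] unfolding ys_def by simp
        also have "\<dots> \<le> norm ys * norm (x - z)" using norm_blinfun[of ys "x - z"] by simp
        also have "\<dots> \<le> real_of_ereal L * norm (x - z)" using nys by (simp add: mult_right_mono)
        finally show "psi (x, xs) - psi (z, xs) \<le> real_of_ereal L * norm (x - z)" .
      qed simp_all
    qed
    assume Lf: "L < \<infinity>"
    show "dom_e h = UNIV \<times> (snd ` dom_e h)"
    proof
      show "dom_e h \<subseteq> UNIV \<times> snd ` dom_e h" by force
    next
      show "UNIV \<times> snd ` dom_e h \<subseteq> dom_e h"
      proof
        fix p :: "'a \<times> ('a \<Rightarrow>\<^sub>L real)" assume "p \<in> UNIV \<times> snd ` dom_e h"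
        then obtain z where z: "(z, snd p) \<in> dom_e h" by (cases p) force
        have "h (fst p, snd p) \<le> h (z, snd p) + L * ereal (norm (fst p - z))" using lip by blast
        then have "(fst p, snd p) \<in> dom_e h" using fin[OF _ z Lf] by blast
        then show "p \<in> dom_e h" by simp
      qed
    qed
  next
    assume H: "\<forall>yss \<in> snd ` dom_e (conj_e h). ereal (norm yss) \<le> L"
    show lip: "\<forall>xs zs x. h (x, xs) \<le> h (x, zs) + L * ereal (norm (xs - zs))"
    proof (intro allI)
      fix xs zs x
      show "h (x, xs) \<le> h (x, zs) + L * ereal (norm (xs - zs))"
      proof (rule gen[of "norm (xs - zs)"])
        fix psi c assume bl: "bounded_linear psi" and mn: "\<forall>u. ereal (psi u - c) \<le> h u" and Lf: "L \<noteq> \<infinity>"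
        define yss where "yss = Blinfun (\<lambda>xs. psi (0,xs))"
        have bl2: "bounded_linear (\<lambda>xs. psi (0,xs))"
          using bounded_linear_compose[OF bl bounded_linear_Pair[OF bounded_linear_zero bounded_linear_ident]] .
        have "yss \<in> snd ` dom_e (conj_e h)" using dual_dom[OF bl mn] unfolding yss_def by force
        then have "ereal (norm yss) \<le> L" using H by blast
        then have nys: "norm yss \<le> real_of_ereal L" using Lf L0 by (cases L) auto
        have "psi (x, xs) - psi (x, zs) = blinfun_apply yss (xs - zs)"
          using lin2[OF bounded_linear.linear[OF bl]] bounded_linear_Blinfun_apply[OF bl2] unfolding yss_def by simp
        also have "\<dots> \<le> norm yss * norm (xs - zs)" using norm_blinfun[of yss "xs - zs"] by simp
        also have "\<dots> \<le> real_of_ereal L * norm (xs - zs)" using nys by (simp add: mult_right_mono)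
        finally show "psi (x, xs) - psi (x, zs) \<le> real_of_ereal L * norm (xs - zs)" .
      qed simp_all
    qed
    assume Lf: "L < \<infinity>"
    show "dom_e h = (fst ` dom_e h) \<times> UNIV"
    proof
      show "dom_e h \<subseteq> (fst ` dom_e h) \<times> UNIV" by force
    next
      show "(fst ` dom_e h) \<times> UNIV \<subseteq> dom_e h"
      proof
        fix p :: "'a \<times> ('a \<Rightarrow>\<^sub>L real)" assume "p \<in> (fst ` dom_e h) \<times> UNIV"
        then obtain z where z: "(fst p, z) \<in> dom_e h" by (cases p) force
        have "h (fst p, snd p) \<le> h (fst p, z) + L * ereal (norm (snd p - z))" using lip by blast
        then have "(fst p, snd p) \<in> dom_e h" using fin[OF _ z Lf] by blast
        then show "p \<in> dom_e h" by simp
      qed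
    qed
  qed
qed

end
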